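(* Consider the mergesort that recursively splits the input sequence into two contiguous parts, sorts each, and merges them with the following merge algorithm: set $T=\emptyset$; repeat: if $T_1$ is empty return $\mathrm{join}(T,T_2)$; else if $T_2$ is empty return $\mathrm{join}(T,T_1)$; else with $k_1=\min(T_1)$, $k_2=\min(T_2)$, if $k_1>k_2$ let $(t,T_2)=\mathrm{split}(T_2,k_1)$, else let $(t,T_1)=\mathrm{split}(T_1,k_2)$, and set $T=\mathrm{join}(T,t)$. Then this mergesort sorts a sequence $\pi$ in time $O(\mathrm{LIB}(\pi))$.
   Context: Trees are heterogeneous finger search trees: $\mathrm{split}(T,k)$ returns the trees of keys of $T$ less than and greater than $k$; $\mathrm{join}$ of two trees whose key ranges do not interleave returns a BST on their union; both run in amortized time $O(\lg(\min(|T_1|,|T_2|)+1))$ where $T_1,T_2$ are the two smaller trees. Keys are distinct. $\mathrm{LIB}(\pi)$ is computed with respect to the static binary tree $P$ given by the recursion of the mergesort, whose leaves are the keys of $\pi$ in the order of $\pi$: for each internal vertex $v$, list the leaves below $v$ in sorted key order, labeling each L or R by the subtree of $v$ containing it; with $S(v)$ the decomposition into the minimum number of runs of equal labels, $\mathrm{LIB}(v)=\sum_{r\in S(v)}\lg(|r|+1)$ and $\mathrm{LIB}(\pi)=\sum_v\mathrm{LIB}(v)$. *)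

theory Defs
  imports Complex_Main
begin

text \<open>Model of the heterogeneous finger search trees: a tree is represented by the
  sorted list of its keys. Operations and their (amortized) cost bounds.\<close>

definition tsplit :: "'a::linorder list \<Rightarrow> 'a \<Rightarrow> 'a list \<times> 'a list" where
  "tsplit T k = (filter (\<lambda>x. x < k) T, filter (\<lambda>x. k < x) T)"

definition tjoin :: "'a list \<Rightarrow> 'a list \<Rightarrow> 'a list" where
  "tjoin A B = A @ B"

text \<open>Cost of split/join: lg(min(|T1|,|T2|)+1), T1,T2 the two smaller trees.\<close>
definition opcost :: "'a list \<Rightarrow> 'b list \<Rightarrow> real" where
  "opcost A B = log 2 (real (min (length A) (length B)) + 1)"

text \<open>Each loop iteration and each return is charged one unit of constant overhead
  (emptiness tests, minima, comparison) plus the cost bounds of split and join.\<close>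
function mrg :: "'a::linorder list \<Rightarrow> 'a list \<Rightarrow> 'a list \<Rightarrow> 'a list \<times> real" where
  "mrg T T1 T2 =
    (if T1 = [] then (tjoin T T2, 1 + opcost T T2)
     else if T2 = [] then (tjoin T T1, 1 + opcost T T1)
     else (let k1 = hd T1; k2 = hd T2 in
       if k1 > k2 then
         (let (t, T2') = tsplit T2 k1;
              (R, c) = mrg (tjoin T t) T1 T2'
          in (R, 1 + opcost t T2' + opcost T t + c))
       else
         (let (t, T1') = tsplit T1 k2;
              (R, c) = mrg (tjoin T t) T1' T2
          in (R, 1 + opcost t T1' + opcost T t + c))))"
  by pat_completeness auto
termination
proof (relation "measure (\<lambda>(T, T1, T2). length T1 + length T2)")
  show "wf (measure (\<lambda>(T, T1, T2). length T1 + length T2))" by simp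
next
  fix T T1 T2 :: "'a list" and k1 k2 x t T2'
  assume "T1 \<noteq> []" "T2 \<noteq> []" "k1 = hd T1" "k2 = hd T2" "k2 < k1"
    "x = tsplit T2 k1" "(t, T2') = x"
  then have "T2' = filter (\<lambda>x. k1 < x) T2" by (simp add: tsplit_def)
  moreover have "length (filter (\<lambda>x. k1 < x) T2) < length T2"
    using \<open>T2 \<noteq> []\<close> \<open>k2 = hd T2\<close> \<open>k2 < k1\<close>
    by (intro length_filter_less[of k2]) auto
  ultimately show "((tjoin T t, T1, T2'), T, T1, T2)
      \<in> measure (\<lambda>(T, T1, T2). length T1 + length T2)" by simp
next
  fix T T1 T2 :: "'a list" and k1 k2 x t T1'
  assume "T1 \<noteq> []" "T2 \<noteq> []" "k1 = hd T1" "k2 = hd T2" "\<not> k2 < k1"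
    "x = tsplit T1 k2" "(t, T1') = x"
  then have "T1' = filter (\<lambda>x. k2 < x) T1" by (simp add: tsplit_def)
  moreover have "length (filter (\<lambda>x. k2 < x) T1) < length T1"
    using \<open>T1 \<noteq> []\<close> \<open>k1 = hd T1\<close> \<open>\<not> k2 < k1\<close>
    by (intro length_filter_less[of k1]) auto
  ultimately show "((tjoin T t, T1', T2), T, T1, T2)
      \<in> measure (\<lambda>(T, T1, T2). length T1 + length T2)" by simp
qed

function msort :: "'a::linorder list \<Rightarrow> 'a list \<times> real" where
  "msort xs =
    (if length xs \<le> 1 then (xs, 1)
     else (let h = length xs div 2;
               (A, ca) = msort (take h xs);
               (B, cb) = msort (drop h xs);
               (M, cm) = mrg [] A B
           in (M, 1 + ca + cb + cm)))"
  by pat_completeness auto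
termination
  by (relation "measure length") auto

function runs :: "bool list \<Rightarrow> nat list" where
  "runs [] = []"
| "runs (b # bs) = (length (takeWhile (\<lambda>c. c = b) bs) + 1) # runs (dropWhile (\<lambda>c. c = b) bs)"
  by pat_completeness auto
termination
  by (relation "measure length") (auto simp: le_imp_less_Suc length_dropWhile_le)

text \<open>LIB of an internal vertex whose left subtree has leaves L and right subtree leaves R:
  label the leaves in sorted key order by L (True) / R (False).\<close>
definition LIB_vertex :: "'a::linorder list \<Rightarrow> 'a list \<Rightarrow> real" where
  "LIB_vertex L R =
     sum_list (map (\<lambda>r. log 2 (real r + 1)) (runs (map (\<lambda>x. x \<in> set L) (sort (L @ R)))))"

function LIB :: "'a::linorder list \<Rightarrow> real" where
  "LIB xs =
    (if length xs \<le> 1 then 0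
     else (let h = length xs div 2
           in LIB (take h xs) + LIB (drop h xs) + LIB_vertex (take h xs) (drop h xs)))"
  by pat_completeness auto
termination
  by (relation "measure length") auto

end

theory Submission
  imports Defs
begin

definition W :: "bool list \<Rightarrow> real" where
  "W bs = sum_list (map (\<lambda>r. log 2 (real r + 1)) (runs bs))"

lemma W_nonneg: "W bs \<ge> 0"
  unfolding W_def by (intro sum_list_nonneg) auto

lemma W_Cons: "W (b # bs) \<ge> 1"
proof -
  have "W (b # bs) = log 2 (real (length (takeWhile (\<lambda>c. c = b) bs) + 1) + 1)
      + W (dropWhile (\<lambda>c. c = b) bs)" by (simp add: W_def)
  moreover have "log 2 (real (length (takeWhile (\<lambda>c. c = b) bs) + 1) + 1) \<ge> 1" by simp
  ultimately show ?thesis using W_nonneg[of "dropWhile (\<lambda>c. c = b) bs"] by linarith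
qed

lemma runs_rep: "m > 0 \<Longrightarrow> (cs = [] \<or> hd cs \<noteq> b) \<Longrightarrow> runs (replicate m b @ cs) = m # runs cs"
proof -
  assume m: "m > 0" and c: "cs = [] \<or> hd cs \<noteq> b"
  then obtain k where k: "m = Suc k" by (cases m) auto
  have tw: "takeWhile (\<lambda>c. c = b) (replicate k b @ cs) = replicate k b"
    using c by (cases cs) (auto simp: takeWhile_append)
  have dw: "dropWhile (\<lambda>c. c = b) (replicate k b @ cs) = cs"
    using c by (cases cs) (auto simp: dropWhile_append)
  show ?thesis using tw dw k by simp
qed

lemma W_rep: "m > 0 \<Longrightarrow> (cs = [] \<or> hd cs \<noteq> b) \<Longrightarrow> W (replicate m b @ cs) = log 2 (real m + 1) + W cs"
  by (simp add: W_def runs_rep)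

lemma opcost_le1: "opcost A B \<le> log 2 (real (length A) + 1)"
  unfolding opcost_def by simp

lemma opcost_le2: "opcost A B \<le> log 2 (real (length B) + 1)"
  unfolding opcost_def by simp

lemma sort_eqI: "sorted xs \<Longrightarrow> distinct xs \<Longrightarrow> set xs = set ys \<Longrightarrow> distinct ys \<Longrightarrow> sort ys = xs"
  by (metis distinct_sort set_sort sorted_distinct_set_unique sorted_sort)

lemma sorted_filter': "sorted xs \<Longrightarrow> sorted (filter P xs)"
  by (simp add: sorted_wrt_filter)

declare mrg.simps[simp del]

lemma mrg_main:
  "sorted T1 \<Longrightarrow> distinct T1 \<Longrightarrow> sorted T2 \<Longrightarrow> distinct T2 \<Longrightarrow> set T1 \<inter> set T2 = {} \<Longrightarrow>
   fst (mrg T T1 T2) = T @ sort (T1 @ T2) \<and>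
   snd (mrg T T1 T2) \<le> 1 + 3 * W (map (\<lambda>x. x \<in> set T1) (sort (T1 @ T2)))"
proof (induction "length T1 + length T2" arbitrary: T T1 T2 rule: less_induct)
  case less
  note s1 = less.prems(1) and d1 = less.prems(2) and s2 = less.prems(3)
    and d2 = less.prems(4) and dj = less.prems(5)
  have hdne: "T1 \<noteq> [] \<Longrightarrow> T2 \<noteq> [] \<Longrightarrow> hd T1 \<noteq> hd T2"
    using dj hd_in_set by fastforce
  consider "T1 = []" | "T1 \<noteq> []" "T2 = []" | "T1 \<noteq> []" "T2 \<noteq> []" "hd T2 < hd T1"
    | "T1 \<noteq> []" "T2 \<noteq> []" "hd T1 < hd T2"
    using hdne by force
  then show ?case
  proof cases
    case 1
    have eq: "mrg T T1 T2 = (T @ T2, 1 + opcost T T2)"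
      using 1 by (subst mrg.simps) (simp add: tjoin_def)
    have so: "sort (T1 @ T2) = T2" using 1 s2 by (simp add: sorted_sort_id)
    have lab: "map (\<lambda>x. x \<in> set T1) (sort (T1 @ T2)) = replicate (length T2) False"
      using 1 so by (simp add: map_replicate_const)
    have "snd (mrg T T1 T2) \<le> 1 + 3 * W (replicate (length T2) False)"
    proof (cases "T2 = []")
      case True
      then show ?thesis using eq by (simp add: W_def opcost_def)
    next
      case False
      have "W (replicate (length T2) False) = log 2 (real (length T2) + 1)"
        using W_rep[of "length T2" "[]" False] False by (simp add: W_def)
      moreover have "log 2 (real (length T2) + 1) \<ge> 0" by simp
      ultimately have "1 + opcost T T2 \<le> 1 + 3 * W (replicate (length T2) False)"
        using opcost_le2[of T T2] by linarith
      then show ?thesis using eq by simp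
    qed
    then show ?thesis using eq so lab by simp
  next
    case 2
    have eq: "mrg T T1 T2 = (T @ T1, 1 + opcost T T1)"
      using 2 by (subst mrg.simps) (simp add: tjoin_def)
    have so: "sort (T1 @ T2) = T1" using 2 s1 by (simp add: sorted_sort_id)
    have lab: "map (\<lambda>x. x \<in> set T1) (sort (T1 @ T2)) = replicate (length T1) True"
    proof -
      have "map (\<lambda>x. x \<in> set T1) T1 = map (\<lambda>x. True) T1" by (rule map_cong) auto
      then show ?thesis using so by (simp add: map_replicate_const)
    qed
    have "W (replicate (length T1) True) = log 2 (real (length T1) + 1)"
      using W_rep[of "length T1" "[]" True] 2 by (simp add: W_def)
    moreover have "log 2 (real (length T1) + 1) \<ge> 0" by simp
    ultimately have "1 + opcost T T1 \<le> 1 + 3 * W (replicate (length T1) True)"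
      using opcost_le2[of T T1] by linarith
    then show ?thesis using eq so lab by simp
  next
    case 3
    define k1 where "k1 = hd T1"
    define t where "t = filter (\<lambda>x. x < k1) T2"
    define T2' where "T2' = filter (\<lambda>x. k1 < x) T2"
    have eq: "mrg T T1 T2 = (fst (mrg (T @ t) T1 T2'),
        1 + opcost t T2' + opcost T t + snd (mrg (T @ t) T1 T2'))"
      using 3 by (subst mrg.simps) (simp add: tsplit_def tjoin_def Let_def case_prod_beta t_def T2'_def k1_def)
    have k1in: "k1 \<in> set T1" using 3 k1_def by simp
    have k1notin: "k1 \<notin> set T2" using k1in dj by blast
    obtain r1 where T1eq: "T1 = k1 # r1" using 3 k1_def by (cases T1) auto
    have k1r: "\<forall>y\<in>set r1. k1 \<le> y" "sorted r1" using s1 T1eq by simp_all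
    have k1le: "\<forall>y\<in>set T1. k1 \<le> y" using k1r T1eq by auto
    have hd2: "hd T2 \<in> set t" using 3 k1_def t_def by simp
    have tne: "length t > 0" using hd2 by (cases t) auto
    have s2': "sorted T2'" "distinct T2'" using s2 d2 by (simp_all add: T2'_def sorted_filter')
    have st: "sorted t" "distinct t" using s2 d2 by (simp_all add: t_def sorted_filter')
    have dj': "set T1 \<inter> set T2' = {}" using dj by (auto simp: T2'_def)
    have len: "length T1 + length T2' < length T1 + length T2"
    proof -
      have "length T2' < length T2" unfolding T2'_def
        using hd2 t_def by (intro length_filter_less[of "hd T2"]) auto
      then show ?thesis by simp
    qed
    have IH: "fst (mrg (T @ t) T1 T2') = (T @ t) @ sort (T1 @ T2') \<and>
        snd (mrg (T @ t) T1 T2') \<le> 1 + 3 * W (map (\<lambda>x. x \<in> set T1) (sort (T1 @ T2')))"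
      using less.hyps[OF len] s1 d1 s2' dj' by blast
    have set2: "set T2 = set t \<union> set T2'" using k1notin
      by (auto simp: t_def T2'_def) (metis linorder_neqE)
    have tlt: "\<forall>x\<in>set t. x < k1" by (simp add: t_def)
    have sort1: "sort (T1 @ T2') = k1 # sort (r1 @ T2')"
    proof (rule sort_eqI)
      show "sorted (k1 # sort (r1 @ T2'))"
        using k1r by (auto simp: T2'_def)
      show "distinct (k1 # sort (r1 @ T2'))" using d1 dj' s2' T1eq
        by (auto simp: T2'_def)
      show "set (k1 # sort (r1 @ T2')) = set (T1 @ T2')" using T1eq by auto
      show "distinct (T1 @ T2')" using d1 s2' dj' by simp
    qed
    have lt: "\<forall>x\<in>set t. \<forall>y\<in>set (T1 @ T2'). x < y"
    proof (intro ballI)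
      fix x y assume x: "x \<in> set t" and y: "y \<in> set (T1 @ T2')"
      have "x < k1" using x tlt by blast
      moreover have "k1 \<le> y" using y k1le by (auto simp: T2'_def)
      ultimately show "x < y" by simp
    qed
    have sort2: "sort (T1 @ T2) = t @ sort (T1 @ T2')"
    proof (rule sort_eqI)
      show "sorted (t @ sort (T1 @ T2'))"
        using st lt by (auto simp: sorted_append intro: less_imp_le)
      show "distinct (t @ sort (T1 @ T2'))" using st d1 s2' dj' lt
        by (auto simp: distinct_append)
      show "set (t @ sort (T1 @ T2')) = set (T1 @ T2)" using set2 by auto
      show "distinct (T1 @ T2)" using d1 d2 dj by simp
    qed
    have labt: "map (\<lambda>x. x \<in> set T1) t = replicate (length t) False"
    proof -
      have "map (\<lambda>x. x \<in> set T1) t = map (\<lambda>x. False) t" using dj set2 by (intro map_cong) auto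
      then show ?thesis by (simp add: map_replicate_const)
    qed
    have Weq: "W (map (\<lambda>x. x \<in> set T1) (sort (T1 @ T2))) =
        log 2 (real (length t) + 1) + W (map (\<lambda>x. x \<in> set T1) (sort (T1 @ T2')))"
      unfolding sort2 map_append labt
      by (rule W_rep[OF tne]) (simp add: sort1 k1in)
    have L1: "log 2 (real (length t) + 1) \<ge> 1" using tne by (simp add: Suc_leI)
    have "snd (mrg T T1 T2) \<le> 1 + 3 * W (map (\<lambda>x. x \<in> set T1) (sort (T1 @ T2)))"
    proof -
      have "snd (mrg T T1 T2) = 1 + opcost t T2' + opcost T t + snd (mrg (T @ t) T1 T2')"
        using eq by simp
      then show ?thesis using IH Weq L1 opcost_le1[of t T2'] opcost_le2[of T t] by linarith
    qed
    moreover have "fst (mrg T T1 T2) = T @ sort (T1 @ T2)" using eq IH sort2 by simp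
    ultimately show ?thesis by blast
  next
    case 4
    define k2 where "k2 = hd T2"
    define t where "t = filter (\<lambda>x. x < k2) T1"
    define T1' where "T1' = filter (\<lambda>x. k2 < x) T1"
    have eq: "mrg T T1 T2 = (fst (mrg (T @ t) T1' T2),
        1 + opcost t T1' + opcost T t + snd (mrg (T @ t) T1' T2))"
      using 4 less_imp_not_less[OF 4(3)] by (subst mrg.simps) (simp add: tsplit_def tjoin_def Let_def case_prod_beta t_def T1'_def k2_def)
    have k2in: "k2 \<in> set T2" using 4 k2_def by simp
    have k2notin: "k2 \<notin> set T1" using k2in dj by blast
    obtain r2 where T2eq: "T2 = k2 # r2" using 4 k2_def by (cases T2) auto
    have k2r: "\<forall>y\<in>set r2. k2 \<le> y" "sorted r2" using s2 T2eq by simp_all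
    have k2le: "\<forall>y\<in>set T2. k2 \<le> y" using k2r T2eq by auto
    have hd1: "hd T1 \<in> set t" using 4 k2_def t_def by simp
    have tne: "length t > 0" using hd1 by (cases t) auto
    have s1': "sorted T1'" "distinct T1'" using s1 d1 by (simp_all add: T1'_def sorted_filter')
    have st: "sorted t" "distinct t" using s1 d1 by (simp_all add: t_def sorted_filter')
    have dj': "set T1' \<inter> set T2 = {}" using dj by (auto simp: T1'_def)
    have len: "length T1' + length T2 < length T1 + length T2"
    proof -
      have "length T1' < length T1" unfolding T1'_def
        using hd1 t_def by (intro length_filter_less[of "hd T1"]) auto
      then show ?thesis by simp
    qed
    have IH: "fst (mrg (T @ t) T1' T2) = (T @ t) @ sort (T1' @ T2) \<and>
        snd (mrg (T @ t) T1' T2) \<le> 1 + 3 * W (map (\<lambda>x. x \<in> set T1') (sort (T1' @ T2)))"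
      using less.hyps[OF len] s1' s2 d2 dj' by blast
    have set1: "set T1 = set t \<union> set T1'" using k2notin
      by (auto simp: t_def T1'_def) (metis linorder_neqE)
    have tlt: "\<forall>x\<in>set t. x < k2" by (simp add: t_def)
    have sort1: "sort (T1' @ T2) = k2 # sort (T1' @ r2)"
    proof (rule sort_eqI)
      show "sorted (k2 # sort (T1' @ r2))"
        using k2r by (auto simp: T1'_def)
      show "distinct (k2 # sort (T1' @ r2))" using d2 dj' s1' T2eq
        by (auto simp: T1'_def)
      show "set (k2 # sort (T1' @ r2)) = set (T1' @ T2)" using T2eq by auto
      show "distinct (T1' @ T2)" using d2 s1' dj' by simp
    qed
    have lt: "\<forall>x\<in>set t. \<forall>y\<in>set (T1' @ T2). x < y"
    proof (intro ballI)
      fix x y assume x: "x \<in> set t" and y: "y \<in> set (T1' @ T2)"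
      have "x < k2" using x tlt by blast
      moreover have "k2 \<le> y" using y k2le by (auto simp: T1'_def)
      ultimately show "x < y" by simp
    qed
    have sort2: "sort (T1 @ T2) = t @ sort (T1' @ T2)"
    proof (rule sort_eqI)
      show "sorted (t @ sort (T1' @ T2))"
        using st lt by (auto simp: sorted_append intro: less_imp_le)
      show "distinct (t @ sort (T1' @ T2))" using st d2 s1' dj' lt
        by (auto simp: distinct_append)
      show "set (t @ sort (T1' @ T2)) = set (T1 @ T2)" using set1 by auto
      show "distinct (T1 @ T2)" using d1 d2 dj by simp
    qed
    have labt: "map (\<lambda>x. x \<in> set T1) t = replicate (length t) True"
    proof -
      have "map (\<lambda>x. x \<in> set T1) t = map (\<lambda>x. True) t" using set1 by (intro map_cong) auto
      then show ?thesis by (simp add: map_replicate_const)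
    qed
    have labr: "map (\<lambda>x. x \<in> set T1) (sort (T1' @ T2)) = map (\<lambda>x. x \<in> set T1') (sort (T1' @ T2))"
    proof (intro map_cong refl)
      fix x assume "x \<in> set (sort (T1' @ T2))"
      then have "x \<in> set T1' \<or> x \<in> set T2" by simp
      then show "(x \<in> set T1) = (x \<in> set T1')" using dj by (auto simp: T1'_def)
    qed
    have Weq: "W (map (\<lambda>x. x \<in> set T1) (sort (T1 @ T2))) =
        log 2 (real (length t) + 1) + W (map (\<lambda>x. x \<in> set T1') (sort (T1' @ T2)))"
      unfolding sort2 map_append labt labr[symmetric]
      by (rule W_rep[OF tne]) (simp add: sort1 k2notin)
    have L1: "log 2 (real (length t) + 1) \<ge> 1" using tne by (simp add: Suc_leI)
    have "snd (mrg T T1 T2) \<le> 1 + 3 * W (map (\<lambda>x. x \<in> set T1) (sort (T1 @ T2)))"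
    proof -
      have "snd (mrg T T1 T2) = 1 + opcost t T1' + opcost T t + snd (mrg (T @ t) T1' T2)"
        using eq by simp
      then show ?thesis using IH Weq L1 opcost_le1[of t T1'] opcost_le2[of T t] by linarith
    qed
    moreover have "fst (mrg T T1 T2) = T @ sort (T1 @ T2)" using eq IH sort2 by simp
    ultimately show ?thesis by blast
  qed
qed

declare msort.simps[simp del] LIB.simps[simp del]

lemma msort_main: "distinct xs \<Longrightarrow> fst (msort xs) = sort xs \<and> snd (msort xs) \<le> 6 * LIB xs + 1"
proof (induction "length xs" arbitrary: xs rule: less_induct)
  case less
  show ?case
  proof (cases "length xs \<le> 1")
    case True
    have "msort xs = (xs, 1)" using True by (subst msort.simps) simp
    moreover have "LIB xs = 0" using True by (subst LIB.simps) simp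
    moreover have "sort xs = xs" using True by (cases xs) auto
    ultimately show ?thesis by simp
  next
    case False
    define h where "h = length xs div 2"
    define A where "A = take h xs"
    define B where "B = drop h xs"
    have lA: "length A < length xs" using False by (simp add: A_def h_def)
    have lB: "length B < length xs" using False by (simp add: B_def h_def)
    have dA: "distinct A" using less.prems by (simp add: A_def)
    have dB: "distinct B" using less.prems by (simp add: B_def)
    have djAB: "set A \<inter> set B = {}" using less.prems
      by (simp add: A_def B_def set_take_disj_set_drop_if_distinct)
    have AB: "A @ B = xs" by (simp add: A_def B_def)
    have IHA: "fst (msort A) = sort A \<and> snd (msort A) \<le> 6 * LIB A + 1"
      using less.hyps[OF lA dA] .
    have IHB: "fst (msort B) = sort B \<and> snd (msort B) \<le> 6 * LIB B + 1"
      using less.hyps[OF lB dB] .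
    have ms: "msort xs = (fst (mrg [] (fst (msort A)) (fst (msort B))),
        1 + snd (msort A) + snd (msort B) + snd (mrg [] (fst (msort A)) (fst (msort B))))"
      using False by (subst msort.simps) (simp add: Let_def case_prod_beta h_def A_def B_def)
    have lib: "LIB xs = LIB A + LIB B + LIB_vertex A B"
      using False by (subst LIB.simps) (simp add: Let_def h_def A_def B_def)
    have M: "fst (mrg [] (sort A) (sort B)) = sort (sort A @ sort B) \<and>
        snd (mrg [] (sort A) (sort B)) \<le> 1 + 3 * W (map (\<lambda>x. x \<in> set (sort A)) (sort (sort A @ sort B)))"
      using mrg_main[of "sort A" "sort B" "[]"] dA dB djAB by simp
    have ss: "sort (sort A @ sort B) = sort xs"
      by (rule sort_eqI) (use dA dB djAB AB less.prems in auto)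
    have lv: "W (map (\<lambda>x. x \<in> set (sort A)) (sort (sort A @ sort B))) = LIB_vertex A B"
      unfolding LIB_vertex_def W_def ss AB[symmetric] by simp
    have ne: "sort xs \<noteq> []" using False by (cases xs) auto
    have W1: "LIB_vertex A B \<ge> 1"
    proof -
      obtain y ys where "sort xs = y # ys" using ne by (cases "sort xs") auto
      then have "map (\<lambda>x. x \<in> set (sort A)) (sort (sort A @ sort B)) =
          (y \<in> set (sort A)) # map (\<lambda>x. x \<in> set (sort A)) ys" using ss by simp
      then show ?thesis using lv W_Cons by metis
    qed
    have "snd (msort xs) \<le> 6 * LIB xs + 1"
      using ms IHA IHB M lv W1 lib by simp
    moreover have "fst (msort xs) = sort xs" using ms IHA IHB M ss by simp
    ultimately show ?thesis by blast
  qed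
qed

theorem lemma7:
  "\<exists>c::real. \<forall>\<pi>::'a::linorder list. distinct \<pi> \<longrightarrow>
      fst (msort \<pi>) = sort \<pi> \<and> snd (msort \<pi>) \<le> c * (1 + LIB \<pi>)"
proof (intro exI[of _ 6] allI impI)
  fix \<pi> :: "'a list" assume "distinct \<pi>"
  then show "fst (msort \<pi>) = sort \<pi> \<and> snd (msort \<pi>) \<le> 6 * (1 + LIB \<pi>)"
    using msort_main[of \<pi>] by simp
qed

end
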